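(* Let $d_0,d_1>0$ with $d_0+d_1=1$, and let $C_\alpha>0$, $C_\beta>0$. With $f_{j+i}=f(x_{j+i})$ on a uniform grid $x_{j+i}=x_j+i\Delta x$, define $\beta_0^*,\beta_1^*$ and $\tau_4$ by $$\beta_0^*=\tfrac14(3f_j-4f_{j-1}+f_{j-2})^2+C_\beta(f_{j-2}-2f_{j-1}+f_j)^2,\quad \beta_1^*=\tfrac14(3f_j-4f_{j+1}+f_{j+2})^2+C_\beta(f_j-2f_{j+1}+f_{j+2})^2,$$ $$\tau_4=\bigl|(f_{j+2}-3f_{j+1}+3f_j-f_{j-1})(2f_{j+1}-3f_j+f_{j-1})\bigr|,$$ and the nonlinear weights (with exponent $p=1$ and $\varepsilon=0$) $$\alpha_k=d_k\bigl(1+C_\alpha\,\tau_4/\beta_k^*\bigr),\qquad \omega_k=\frac{\alpha_k}{\alpha_0+\alpha_1},\quad k=0,1.$$ Assume $f$ is $C^6$ near the relevant points. Then $\omega_k-d_k=O(\Delta x^2)$ as $\Delta x\to0^+$ in each of the following situations: (1) $x_j=x^*$ is fixed and $f'(x^* )\ne0$; (2) $f'(x_c)=0$, $f''(x_c)\ne0$, $f'''(x_c)\ne0$ and, for a fixed $\lambda\in(-1,1)$, the grid is placed so that $x_c=x_j+\lambda\Delta x$.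
   Context: This is the weight construction of the WENO3-Z$_{ES4}$ scheme (which uses $C_\beta=2.0$, $C_\alpha=1.3$, $p=1$); $d_k$ are the linear weights of the third-order WENO reconstruction, $\beta_k^*$ the local smoothness indicators, $\tau_4$ the global smoothness indicator. The condition $\omega_k-d_k=O(\Delta x^2)$ is the standard sufficient condition for third-order accuracy of the WENO3 reconstruction. A point $x_c$ with $f'(x_c)=0$, $f''(x_c)\ne0$, $f'''(x_c)\ne0$ is a first-order critical point ($CP_1$). *)

theory Defs
  imports "HOL-Analysis.Analysis" "HOL-Library.Landau_Symbols"
begin

definition Cn_on :: "nat \<Rightarrow> (real \<Rightarrow> real) \<Rightarrow> real set \<Rightarrow> bool" where
  "Cn_on n f S \<longleftrightarrow> open S \<and>
     (\<forall>k<n. \<forall>x\<in>S. ((deriv ^^ k) f has_real_derivative (deriv ^^ Suc k) f x) (at x)) \<and>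
     continuous_on S ((deriv ^^ n) f)"

definition gv :: "(real \<Rightarrow> real) \<Rightarrow> real \<Rightarrow> real \<Rightarrow> int \<Rightarrow> real" where
  "gv f xj dx i = f (xj + real_of_int i * dx)"

definition beta0s :: "real \<Rightarrow> (real \<Rightarrow> real) \<Rightarrow> real \<Rightarrow> real \<Rightarrow> real" where
  "beta0s Cb f xj dx =
     (1/4) * (3 * gv f xj dx 0 - 4 * gv f xj dx (-1) + gv f xj dx (-2))^2
     + Cb * (gv f xj dx (-2) - 2 * gv f xj dx (-1) + gv f xj dx 0)^2"

definition beta1s :: "real \<Rightarrow> (real \<Rightarrow> real) \<Rightarrow> real \<Rightarrow> real \<Rightarrow> real" where
  "beta1s Cb f xj dx =
     (1/4) * (3 * gv f xj dx 0 - 4 * gv f xj dx 1 + gv f xj dx 2)^2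
     + Cb * (gv f xj dx 0 - 2 * gv f xj dx 1 + gv f xj dx 2)^2"

definition tau4 :: "(real \<Rightarrow> real) \<Rightarrow> real \<Rightarrow> real \<Rightarrow> real" where
  "tau4 f xj dx =
     \<bar>(gv f xj dx 2 - 3 * gv f xj dx 1 + 3 * gv f xj dx 0 - gv f xj dx (-1))
      * (2 * gv f xj dx 1 - 3 * gv f xj dx 0 + gv f xj dx (-1))\<bar>"

definition alpha0 :: "real \<Rightarrow> real \<Rightarrow> real \<Rightarrow> (real \<Rightarrow> real) \<Rightarrow> real \<Rightarrow> real \<Rightarrow> real" where
  "alpha0 d0 Ca Cb f xj dx = d0 * (1 + Ca * tau4 f xj dx / beta0s Cb f xj dx)"

definition alpha1 :: "real \<Rightarrow> real \<Rightarrow> real \<Rightarrow> (real \<Rightarrow> real) \<Rightarrow> real \<Rightarrow> real \<Rightarrow> real" where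
  "alpha1 d1 Ca Cb f xj dx = d1 * (1 + Ca * tau4 f xj dx / beta1s Cb f xj dx)"

definition omega0 :: "real \<Rightarrow> real \<Rightarrow> real \<Rightarrow> real \<Rightarrow> (real \<Rightarrow> real) \<Rightarrow> real \<Rightarrow> real \<Rightarrow> real" where
  "omega0 d0 d1 Ca Cb f xj dx =
     alpha0 d0 Ca Cb f xj dx / (alpha0 d0 Ca Cb f xj dx + alpha1 d1 Ca Cb f xj dx)"

definition omega1 :: "real \<Rightarrow> real \<Rightarrow> real \<Rightarrow> real \<Rightarrow> (real \<Rightarrow> real) \<Rightarrow> real \<Rightarrow> real \<Rightarrow> real" where
  "omega1 d0 d1 Ca Cb f xj dx =
     alpha1 d1 Ca Cb f xj dx / (alpha0 d0 Ca Cb f xj dx + alpha1 d1 Ca Cb f xj dx)"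

end

theory Submission
  imports Defs
begin


lemma taylor3:
  assumes C: "Cn_on 6 f U" and xU: "x \<in> U"
  shows "\<exists>\<delta>>0. \<exists>M. \<forall>t. \<bar>t\<bar> < \<delta> \<longrightarrow>
     \<bar>f (x+t) - (f x + deriv f x * t + (deriv ^^ 2) f x / 2 * t^2)\<bar> \<le> M * \<bar>t\<bar>^3"
proof -
  have oU: "open U" and D: "\<And>k y. k < 6 \<Longrightarrow> y \<in> U \<Longrightarrow>
      ((deriv ^^ k) f has_real_derivative (deriv ^^ Suc k) f y) (at y)"
    using C unfolding Cn_on_def by auto
  obtain e where e: "e > 0" "ball x e \<subseteq> U" using oU xU open_contains_ball by blast
  define d where "d = e/2"
  have sub: "{x-d..x+d} \<subseteq> U" using e unfolding d_def
    by (auto simp: dist_real_def subset_iff)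
  have "continuous_on {x-d..x+d} ((deriv ^^ 3) f)"
  proof (rule continuous_at_imp_continuous_on, intro ballI)
    fix y assume "y \<in> {x-d..x+d}"
    hence "y \<in> U" using sub by auto
    from D[of 3 y, OF _ this] show "isCont ((deriv ^^ 3) f) y"
      using DERIV_isCont by auto
  qed
  then obtain B where B: "\<And>y. y \<in> {x-d..x+d} \<Longrightarrow> norm ((deriv ^^ 3) f y) \<le> B"
    using continuous_on_compact_bound[OF compact_Icc] by blast
  have "\<forall>t. \<bar>t\<bar> < d \<longrightarrow>
     \<bar>f (x+t) - (f x + deriv f x * t + (deriv ^^ 2) f x / 2 * t^2)\<bar> \<le> B/6 * \<bar>t\<bar>^3"
  proof (intro allI impI)
    fix t :: real assume t: "\<bar>t\<bar> < d"
    show "\<bar>f (x+t) - (f x + deriv f x * t + (deriv ^^ 2) f x / 2 * t^2)\<bar> \<le> B/6 * \<bar>t\<bar>^3"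
    proof (cases "t = 0")
      case True then show ?thesis by simp
    next
      case False
      have DD: "\<forall>m s. m < 3 \<and> x-d \<le> s \<and> s \<le> x+d \<longrightarrow>
          DERIV ((deriv ^^ m) f) s :> (deriv ^^ Suc m) f s"
        using D sub by auto
      have "\<exists>s. (if x + t < x then x + t < s \<and> s < x else x < s \<and> s < x + t) \<and>
         f (x+t) = (\<Sum>m<3. (deriv ^^ m) f x / fact m * (x + t - x) ^ m) +
            (deriv ^^ 3) f s / fact 3 * (x + t - x) ^ 3"
        by (rule Taylor[of 3 "\<lambda>m. (deriv ^^ m) f" f "x-d" "x+d" x "x+t", OF _ _ DD])
           (use False t e(1) in \<open>auto simp: d_def\<close>)
      then obtain s where s: "(if x + t < x then x + t < s \<and> s < x else x < s \<and> s < x + t)"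
        and eq: "f (x+t) = (\<Sum>m<3. (deriv ^^ m) f x / fact m * (x + t - x) ^ m) +
            (deriv ^^ 3) f s / fact 3 * (x + t - x) ^ 3" by blast
      have sI: "s \<in> {x-d..x+d}" using s t by (auto split: if_splits)
      have eq2: "f (x+t) - (f x + deriv f x * t + (deriv ^^ 2) f x / 2 * t^2) =
         (deriv ^^ 3) f s / 6 * t^3"
        using eq by (simp add: numeral_3_eq_3 numeral_2_eq_2 lessThan_Suc fact_numeral power2_eq_square algebra_simps)
      have "\<bar>(deriv ^^ 3) f s / 6 * t^3\<bar> = \<bar>(deriv ^^ 3) f s\<bar> / 6 * \<bar>t\<bar>^3"
        by (simp add: abs_mult power_abs)
      also have "\<dots> \<le> B / 6 * \<bar>t\<bar>^3"
        using B[OF sI] by (intro mult_right_mono divide_right_mono) auto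
      finally show ?thesis by (simp only: eq2)
    qed
  qed
  moreover have "d > 0" using e unfolding d_def by simp
  ultimately show ?thesis by blast
qed



lemma ev_small: "(e::real) > 0 \<Longrightarrow> eventually (\<lambda>h. 0 < h \<and> h < e) (at_right 0)"
  by (auto simp: eventually_at_right_field intro!: exI[of _ e])

lemma rem_bigo:
  assumes "Cn_on 6 f U" "x \<in> U"
  shows "(\<lambda>h. f (x + c*h) - (f x + deriv f x * (c*h) + (deriv ^^ 2) f x / 2 * (c*h)^2))
           \<in> O[at_right 0](\<lambda>h. h^3)"
proof -
  obtain d M where d: "d > 0" and M: "\<And>t. \<bar>t\<bar> < d \<Longrightarrow>
     \<bar>f (x+t) - (f x + deriv f x * t + (deriv ^^ 2) f x / 2 * t^2)\<bar> \<le> M * \<bar>t\<bar>^3"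
    using taylor3[OF assms] by blast
  have "eventually (\<lambda>h. 0 < h \<and> h < d / (\<bar>c\<bar>+1)) (at_right 0)"
    using d by (intro ev_small) auto
  then show ?thesis
  proof (intro bigoI[where c="M*\<bar>c\<bar>^3"], eventually_elim)
    case (elim h)
    have "\<bar>c\<bar> * h \<le> (\<bar>c\<bar>+1) * h" using elim by (intro mult_right_mono) auto
    also have "\<dots> < d" using elim by (simp add: field_simps)
    finally have "\<bar>c*h\<bar> < d" using elim by (simp add: abs_mult)
    from M[OF this] show ?case using elim by (simp add: abs_mult power_mult_distrib mult_ac)
  qed
qed

lemma pow_mono_bigo: "k \<le> n \<Longrightarrow> (\<lambda>h::real. h^n) \<in> O[at_right 0](\<lambda>h. h^k)"
proof -
  assume kn: "k \<le> n"
  have "eventually (\<lambda>h::real. 0 < h \<and> h < 1) (at_right 0)" by (intro ev_small) auto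
  then show ?thesis
  proof (intro bigoI[where c=1], eventually_elim)
    case (elim h)
    then show ?case using kn by (simp add: power_decreasing abs_of_pos)
  qed
qed

lemma abs_div_le1: "1 \<le> (D::real) \<Longrightarrow> \<bar>X/D\<bar> \<le> \<bar>X\<bar>"
proof -
  assume D: "1 \<le> D"
  have "\<bar>X/D\<bar> = \<bar>X\<bar>/D" using D by simp
  also have "\<dots> \<le> \<bar>X\<bar>/1" using D by (intro divide_left_mono) auto
  finally show ?thesis by simp
qed

lemma omega_alg:
  fixes b0 b1 t d0 d1 Ca :: real
  assumes "d0>0" "d1>0" "d0+d1=1" "Ca>0" "b0>0" "b1>0" "t\<ge>0"
  defines "a0 \<equiv> d0*(1+Ca*t/b0)" and "a1 \<equiv> d1*(1+Ca*t/b1)"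
  shows "\<bar>a0/(a0+a1) - d0\<bar> \<le> Ca*\<bar>t*(b1-b0)\<bar>/(b0*b1)"
    and "a1/(a0+a1) - d1 = -(a0/(a0+a1) - d0)"
proof -
  have "Ca*t/b0 \<ge> 0" "Ca*t/b1 \<ge> 0" using assms by auto
  hence ge: "a0 \<ge> d0" "a1 \<ge> d1" unfolding a0_def a1_def using assms by auto
  hence D: "a0 + a1 \<ge> 1" using assms by linarith
  have d1e: "d1 = 1 - d0" using assms(3) by simp
  have e1: "a0 - d0*(a0+a1) = d0*d1*((1+Ca*t/b0) - (1+Ca*t/b1))"
    unfolding a0_def a1_def d1e using assms(5,6) by (simp add: field_simps)
  have e2: "(1+Ca*t/b0) - (1+Ca*t/b1) = Ca*t*(b1-b0)/(b0*b1)"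
    using assms(5,6) by (simp add: field_simps)
  have key: "a0/(a0+a1) - d0 = d0*d1*(Ca*t*(b1-b0)/(b0*b1))/(a0+a1)"
  proof -
    have "a0/(a0+a1) - d0 = (a0 - d0*(a0+a1))/(a0+a1)" using D by (simp add: field_simps)
    thus ?thesis using e1 e2 by simp
  qed
  have "\<bar>d0*d1*(Ca*t*(b1-b0)/(b0*b1))/(a0+a1)\<bar> \<le> \<bar>d0*d1*(Ca*t*(b1-b0)/(b0*b1))\<bar>"
    using D by (rule abs_div_le1)
  also have "\<dots> \<le> \<bar>Ca*t*(b1-b0)/(b0*b1)\<bar>"
  proof -
    have "d0*d1 \<le> 1" using assms(1-3) by (intro mult_le_one) auto
    moreover have "d0*d1 \<ge> 0" using assms by simp
    ultimately have "\<bar>d0*d1\<bar> \<le> 1" by simp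
    hence "\<bar>d0*d1\<bar> * \<bar>Ca*t*(b1-b0)/(b0*b1)\<bar> \<le> 1 * \<bar>Ca*t*(b1-b0)/(b0*b1)\<bar>"
      by (intro mult_right_mono) auto
    thus ?thesis by (simp add: abs_mult)
  qed
  also have "\<dots> = Ca*\<bar>t*(b1-b0)\<bar>/(b0*b1)" using assms by (simp add: abs_mult)
  finally show "\<bar>a0/(a0+a1) - d0\<bar> \<le> Ca*\<bar>t*(b1-b0)\<bar>/(b0*b1)" using key by simp
  show "a1/(a0+a1) - d1 = -(a0/(a0+a1) - d0)"
  proof -
    have "a1/(a0+a1) = 1 - a0/(a0+a1)" using D by (simp add: field_simps)
    thus ?thesis using d1e by simp
  qed
qed



lemma asym:
  fixes X :: "real \<Rightarrow> real"
  assumes d: "d0>0" "d1>0" "d0+d1=1" and Ca: "Ca>0" and c: "c>0"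
  and ev: "eventually (\<lambda>h. c*h^m \<le> beta0s Cb f (X h) h \<and> c*h^m \<le> beta1s Cb f (X h) h) (at_right 0)"
  and big: "(\<lambda>h. tau4 f (X h) h * (beta1s Cb f (X h) h - beta0s Cb f (X h) h))
              \<in> O[at_right 0](\<lambda>h. h^(2*m+2))"
  shows "(\<lambda>h. omega0 d0 d1 Ca Cb f (X h) h - d0) \<in> O[at_right 0](\<lambda>h. h^2)"
    and "(\<lambda>h. omega1 d0 d1 Ca Cb f (X h) h - d1) \<in> O[at_right 0](\<lambda>h. h^2)"
proof -
  obtain K where K: "K > 0" and evK: "eventually (\<lambda>h. norm (tau4 f (X h) h *
      (beta1s Cb f (X h) h - beta0s Cb f (X h) h)) \<le> K * norm (h^(2*m+2))) (at_right 0)"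
    using big by (elim landau_o.bigE) blast
  have pos: "eventually (\<lambda>h. 0 < h \<and> h < (1::real)) (at_right 0)" by (intro ev_small) auto
  have main: "eventually (\<lambda>h. \<bar>omega0 d0 d1 Ca Cb f (X h) h - d0\<bar> \<le> Ca*K/c^2 * h^2 \<and>
      omega1 d0 d1 Ca Cb f (X h) h - d1 = -(omega0 d0 d1 Ca Cb f (X h) h - d0)) (at_right 0)"
    using ev evK pos
  proof eventually_elim
    case (elim h)
    define b0 where "b0 = beta0s Cb f (X h) h"
    define b1 where "b1 = beta1s Cb f (X h) h"
    define t where "t = tau4 f (X h) h"
    have hm: "h^m > 0" using elim by simp
    have cm: "c*h^m > 0" using hm c by simp
    have b0: "b0 > 0" and b1: "b1 > 0" using elim cm unfolding b0_def b1_def by linarith+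
    have t: "t \<ge> 0" unfolding t_def tau4_def by simp
    note A = omega_alg[OF d Ca b0 b1 t]
    have o0: "omega0 d0 d1 Ca Cb f (X h) h = d0*(1+Ca*t/b0)/(d0*(1+Ca*t/b0) + d1*(1+Ca*t/b1))"
      unfolding omega0_def alpha0_def alpha1_def b0_def b1_def t_def by simp
    have o1: "omega1 d0 d1 Ca Cb f (X h) h = d1*(1+Ca*t/b1)/(d0*(1+Ca*t/b0) + d1*(1+Ca*t/b1))"
      unfolding omega1_def alpha0_def alpha1_def b0_def b1_def t_def by simp
    have P: "\<bar>t*(b1-b0)\<bar> \<le> K * h^(2*m+2)"
      using elim unfolding t_def b0_def b1_def by (simp add: abs_mult)
    have "Ca*\<bar>t*(b1-b0)\<bar>/(b0*b1) \<le> Ca*(K*h^(2*m+2))/((c*h^m)*(c*h^m))"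
    proof (rule frac_le)
      show "0 \<le> Ca*(K*h^(2*m+2))" using Ca K elim by simp
      show "Ca*\<bar>t*(b1-b0)\<bar> \<le> Ca*(K*h^(2*m+2))" using P Ca by simp
      show "0 < (c*h^m)*(c*h^m)" using cm by simp
      show "(c*h^m)*(c*h^m) \<le> b0*b1"
        using elim cm unfolding b0_def b1_def by (intro mult_mono) auto
    qed
    also have "\<dots> = Ca*K/c^2 * h^2"
    proof -
      have "h^(2*m+2) = (h^m*h^m)*h^2" by (simp add: power_add power_mult mult_2 power2_eq_square)
      thus ?thesis using c hm by (simp only:) (simp add: field_simps power2_eq_square)
    qed
    finally show ?case using A o0 o1 by simp
  qed
  show "(\<lambda>h. omega0 d0 d1 Ca Cb f (X h) h - d0) \<in> O[at_right 0](\<lambda>h. h^2)"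
    using main by (intro bigoI[where c="Ca*K/c^2"]) (auto elim!: eventually_mono)
  show "(\<lambda>h. omega1 d0 d1 Ca Cb f (X h) h - d1) \<in> O[at_right 0](\<lambda>h. h^2)"
    using main by (intro bigoI[where c="Ca*K/c^2"]) (auto elim!: eventually_mono)
qed



lemma gv_shift: "gv f (x0 - l*h) h i = f (x0 + (of_int i - l)*h)"
  unfolding gv_def by (rule arg_cong[where f=f]) (simp add: algebra_simps)

lemma expand:
  assumes C: "Cn_on 6 f U" and x0: "x0 \<in> U"
  defines "a0 \<equiv> f x0" and "a1 \<equiv> deriv f x0" and "a2 \<equiv> (deriv ^^ 2) f x0 / 2"
  shows "(\<lambda>h. (3*gv f (x0-l*h) h 0 - 4*gv f (x0-l*h) h (-1) + gv f (x0-l*h) h (-2))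
              - (2*a1*h - 4*l*a2*h^2)) \<in> O[at_right 0](\<lambda>h. h^3)" (is ?A0)
    and "(\<lambda>h. (3*gv f (x0-l*h) h 0 - 4*gv f (x0-l*h) h 1 + gv f (x0-l*h) h 2)
              - (-2*a1*h + 4*l*a2*h^2)) \<in> O[at_right 0](\<lambda>h. h^3)" (is ?A1)
    and "(\<lambda>h. (gv f (x0-l*h) h (-2) - 2*gv f (x0-l*h) h (-1) + gv f (x0-l*h) h 0)
              - 2*a2*h^2) \<in> O[at_right 0](\<lambda>h. h^3)" (is ?B0)
    and "(\<lambda>h. (gv f (x0-l*h) h 0 - 2*gv f (x0-l*h) h 1 + gv f (x0-l*h) h 2)
              - 2*a2*h^2) \<in> O[at_right 0](\<lambda>h. h^3)" (is ?B1)
    and "(\<lambda>h. gv f (x0-l*h) h 2 - 3*gv f (x0-l*h) h 1 + 3*gv f (x0-l*h) h 0 - gv f (x0-l*h) h (-1))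
              \<in> O[at_right 0](\<lambda>h. h^3)" (is ?T)
    and "(\<lambda>h. (2*gv f (x0-l*h) h 1 - 3*gv f (x0-l*h) h 0 + gv f (x0-l*h) h (-1))
              - (a1*h + (3-2*l)*a2*h^2)) \<in> O[at_right 0](\<lambda>h. h^3)" (is ?S)
proof -
  define R where "R c h = f (x0 + c*h) - (a0 + a1*(c*h) + a2*(c*h)^2)" for c h
  have Rb: "(\<lambda>h. R c h) \<in> O[at_right 0](\<lambda>h. h^3)" for c
    using rem_bigo[OF C x0, of c] unfolding R_def a0_def a1_def a2_def by simp
  have g: "gv f (x0-l*h) h 0 = f (x0 + (-l)*h)" "gv f (x0-l*h) h (-1) = f (x0 + (-1-l)*h)"
     "gv f (x0-l*h) h (-2) = f (x0 + (-2-l)*h)" "gv f (x0-l*h) h 1 = f (x0 + (1-l)*h)"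
     "gv f (x0-l*h) h 2 = f (x0 + (2-l)*h)" for h
    by (simp_all add: gv_shift)
  have fR: "f (x0 + c*h) = a0 + a1*(c*h) + a2*(c*h)^2 + R c h" for c h
    unfolding R_def by simp
  note sb = sum_in_bigo landau_o.big.cmult_in_iff
  show ?A0
  proof -
    have "(\<lambda>h. (3*gv f (x0-l*h) h 0 - 4*gv f (x0-l*h) h (-1) + gv f (x0-l*h) h (-2))
              - (2*a1*h - 4*l*a2*h^2)) = (\<lambda>h. 3 * R (-l) h - 4 * R (-1-l) h + R (-2-l) h)"
      by (rule ext, simp only: g fR) (simp add: algebra_simps power2_eq_square)
    thus ?thesis using Rb by (simp add: sb)
  qed
  show ?A1
  proof -
    have "(\<lambda>h. (3*gv f (x0-l*h) h 0 - 4*gv f (x0-l*h) h 1 + gv f (x0-l*h) h 2)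
              - (-2*a1*h + 4*l*a2*h^2)) = (\<lambda>h. 3 * R (-l) h - 4 * R (1-l) h + R (2-l) h)"
      by (rule ext, simp only: g fR) (simp add: algebra_simps power2_eq_square)
    thus ?thesis using Rb by (simp add: sb)
  qed
  show ?B0
  proof -
    have "(\<lambda>h. (gv f (x0-l*h) h (-2) - 2*gv f (x0-l*h) h (-1) + gv f (x0-l*h) h 0)
              - 2*a2*h^2) = (\<lambda>h. R (-2-l) h - 2 * R (-1-l) h + R (-l) h)"
      by (rule ext, simp only: g fR) (simp add: algebra_simps power2_eq_square)
    thus ?thesis using Rb by (simp add: sb)
  qed
  show ?B1
  proof -
    have "(\<lambda>h. (gv f (x0-l*h) h 0 - 2*gv f (x0-l*h) h 1 + gv f (x0-l*h) h 2)
              - 2*a2*h^2) = (\<lambda>h. R (-l) h - 2 * R (1-l) h + R (2-l) h)"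
      by (rule ext, simp only: g fR) (simp add: algebra_simps power2_eq_square)
    thus ?thesis using Rb by (simp add: sb)
  qed
  show ?T
  proof -
    have "(\<lambda>h. gv f (x0-l*h) h 2 - 3*gv f (x0-l*h) h 1 + 3*gv f (x0-l*h) h 0 - gv f (x0-l*h) h (-1))
        = (\<lambda>h. R (2-l) h - 3 * R (1-l) h + 3 * R (-l) h - R (-1-l) h)"
      by (rule ext, simp only: g fR) (simp add: algebra_simps power2_eq_square)
    thus ?thesis using Rb by (simp add: sb)
  qed
  show ?S
  proof -
    have "(\<lambda>h. (2*gv f (x0-l*h) h 1 - 3*gv f (x0-l*h) h 0 + gv f (x0-l*h) h (-1))
              - (a1*h + (3-2*l)*a2*h^2)) = (\<lambda>h. 2 * R (1-l) h - 3 * R (-l) h + R (-1-l) h)"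
      by (rule ext, simp only: g fR) (simp add: algebra_simps power2_eq_square)
    thus ?thesis using Rb by (simp add: sb)
  qed
qed



lemma poly_bigo: "k \<le> n \<Longrightarrow> (\<lambda>h::real. q * h^n) \<in> O[at_right 0](\<lambda>h. h^k)"
proof -
  assume kn: "k \<le> n"
  have "eventually (\<lambda>h::real. 0 < h \<and> h < 1) (at_right 0)" by (intro ev_small) auto
  then show ?thesis
  proof (intro bigoI[where c="\<bar>q\<bar>"], eventually_elim)
    case (elim h)
    then have "h^n \<le> h^k" using kn by (simp add: power_decreasing)
    then show ?case using elim by (simp add: abs_mult mult_left_mono)
  qed
qed

lemma poly1_bigo: "(\<lambda>h::real. q * h) \<in> O[at_right 0](\<lambda>h. h)"
  using poly_bigo[of 1 1 q] by simp

lemma inO: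
  assumes "(\<lambda>h. G h - P h) \<in> O[at_right 0](\<lambda>h::real. h^a)" "P \<in> O[at_right 0](\<lambda>h. h^k)" "k \<le> a"
  shows "G \<in> O[at_right 0](\<lambda>h. h^k)"
proof -
  have "(\<lambda>h. G h - P h) \<in> O[at_right 0](\<lambda>h::real. h^k)"
    using assms(1) pow_mono_bigo[OF assms(3)] by (rule landau_o.big.trans)
  from sum_in_bigo(1)[OF this assms(2)] show ?thesis by simp
qed

lemma powmult:
  assumes "f \<in> O[at_right 0](\<lambda>h::real. h^a)" "g \<in> O[at_right 0](\<lambda>h::real. h^b)"
  shows "(\<lambda>h. f h * g h) \<in> O[at_right 0](\<lambda>h. h^(a+b))"
  using landau_o.big.mult[OF assms] by (simp add: power_add)

lemma lower:
  assumes "(\<lambda>h. G h - P h) \<in> O[at_right 0](\<lambda>h::real. h^(n+1))"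
    and "(\<lambda>h. P h - q*h^n) \<in> O[at_right 0](\<lambda>h::real. h^(n+1))" and q: "q \<noteq> 0"
  shows "eventually (\<lambda>h. 0 < h \<and> \<bar>q\<bar>/2*h^n \<le> \<bar>G h\<bar>) (at_right 0)"
proof -
  have "(\<lambda>h. G h - q*h^n) \<in> O[at_right 0](\<lambda>h::real. h^(n+1))"
    using sum_in_bigo(1)[OF assms(1,2)] by simp
  then obtain K where K: "K > 0" and evK: "eventually (\<lambda>h. norm (G h - q*h^n) \<le> K * norm (h^(n+1))) (at_right 0)"
    by (elim landau_o.bigE) blast
  have "eventually (\<lambda>h. 0 < h \<and> h < \<bar>q\<bar>/(2*K)) (at_right 0)" using K q by (intro ev_small) auto
  with evK show ?thesis
  proof eventually_elim
    case (elim h)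
    have "K*h < \<bar>q\<bar>/2" using elim K by (simp add: field_simps)
    hence "K*h*h^n \<le> \<bar>q\<bar>/2*h^n" using elim by (intro mult_right_mono) auto
    moreover have "\<bar>G h - q*h^n\<bar> \<le> K*h*h^n" using elim by (simp add: abs_mult mult_ac)
    ultimately have "\<bar>G h - q*h^n\<bar> \<le> \<bar>q\<bar>/2*h^n" by linarith
    moreover have "\<bar>q*h^n\<bar> = \<bar>q\<bar>*h^n" using elim by (simp add: abs_mult)
    ultimately show ?case using elim by linarith
  qed
qed



locale wsetup =
  fixes f :: "real \<Rightarrow> real" and xz l Cb :: real
begin
definition "A0 h = 3*gv f (xz-l*h) h 0 - 4*gv f (xz-l*h) h (-1) + gv f (xz-l*h) h (-2)"
definition "A1 h = 3*gv f (xz-l*h) h 0 - 4*gv f (xz-l*h) h 1 + gv f (xz-l*h) h 2"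
definition "B0 h = gv f (xz-l*h) h (-2) - 2*gv f (xz-l*h) h (-1) + gv f (xz-l*h) h 0"
definition "B1 h = gv f (xz-l*h) h 0 - 2*gv f (xz-l*h) h 1 + gv f (xz-l*h) h 2"
definition "T h = gv f (xz-l*h) h 2 - 3*gv f (xz-l*h) h 1 + 3*gv f (xz-l*h) h 0 - gv f (xz-l*h) h (-1)"
definition "S h = 2*gv f (xz-l*h) h 1 - 3*gv f (xz-l*h) h 0 + gv f (xz-l*h) h (-1)"

lemma b0: "beta0s Cb f (xz-l*h) h = A0 h^2/4 + Cb * B0 h^2"
  unfolding beta0s_def A0_def B0_def by simp
lemma b1: "beta1s Cb f (xz-l*h) h = A1 h^2/4 + Cb * B1 h^2"
  unfolding beta1s_def A1_def B1_def by simp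
lemma t4: "tau4 f (xz-l*h) h = \<bar>T h * S h\<bar>"
  unfolding tau4_def T_def S_def by simp

lemma exp':
  assumes "Cn_on 6 f U" "xz \<in> U"
  defines "a1 \<equiv> deriv f xz" and "a2 \<equiv> (deriv ^^ 2) f xz / 2"
  shows "(\<lambda>h. A0 h - (2*a1*h - 4*l*a2*h^2)) \<in> O[at_right 0](\<lambda>h. h^3)"
    and "(\<lambda>h. A1 h - (-2*a1*h + 4*l*a2*h^2)) \<in> O[at_right 0](\<lambda>h. h^3)"
    and "(\<lambda>h. B0 h - 2*a2*h^2) \<in> O[at_right 0](\<lambda>h. h^3)"
    and "(\<lambda>h. B1 h - 2*a2*h^2) \<in> O[at_right 0](\<lambda>h. h^3)"
    and "T \<in> O[at_right 0](\<lambda>h. h^3)"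
    and "(\<lambda>h. S h - (a1*h + (3-2*l)*a2*h^2)) \<in> O[at_right 0](\<lambda>h. h^3)"
  using expand[OF assms(1,2), of l] unfolding a1_def a2_def A0_def A1_def B0_def B1_def T_def S_def
  by (simp_all add: T_def[abs_def])

lemma part1:
  assumes C: "Cn_on 6 f U" and xz: "xz \<in> U" and a1nz: "deriv f xz \<noteq> 0"
    and d: "d0>0" "d1>0" "d0+d1=1" and Ca: "Ca>0" and Cb: "Cb>0"
  shows "(\<lambda>h. omega0 d0 d1 Ca Cb f (xz - l*h) h - d0) \<in> O[at_right 0](\<lambda>h. h^2)"
    and "(\<lambda>h. omega1 d0 d1 Ca Cb f (xz - l*h) h - d1) \<in> O[at_right 0](\<lambda>h. h^2)"
proof -
  define a1 where "a1 = deriv f xz"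
  define a2 where "a2 = (deriv ^^ 2) f xz / 2"
  note E = exp'[OF C xz, folded a1_def a2_def]
  have h32: "(\<lambda>h::real. h^3) \<in> O[at_right 0](\<lambda>h. h^(1+1))" by (rule pow_mono_bigo) simp
  have h31: "(\<lambda>h::real. h^3) \<in> O[at_right 0](\<lambda>h. h^1)" by (rule pow_mono_bigo) simp
  have PA0: "(\<lambda>h. (2*a1*h - 4*l*a2*h^2) - (2*a1)*h^1) \<in> O[at_right 0](\<lambda>h::real. h^(1+1))"
  proof -
    have "(\<lambda>h. (2*a1*h - 4*l*a2*h^2) - (2*a1)*h^1) = (\<lambda>h. (-4*l*a2)*h^2)"
      by (rule ext) (simp add: algebra_simps)
    thus ?thesis by (simp only:) (rule poly_bigo, simp)
  qed
  have PA1: "(\<lambda>h. (-2*a1*h + 4*l*a2*h^2) - (-2*a1)*h^1) \<in> O[at_right 0](\<lambda>h::real. h^(1+1))"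
  proof -
    have "(\<lambda>h. (-2*a1*h + 4*l*a2*h^2) - (-2*a1)*h^1) = (\<lambda>h. (4*l*a2)*h^2)"
      by (rule ext) (simp add: algebra_simps)
    thus ?thesis by (simp only:) (rule poly_bigo, simp)
  qed
  have LA0: "eventually (\<lambda>h. 0 < h \<and> \<bar>2*a1\<bar>/2*h^1 \<le> \<bar>A0 h\<bar>) (at_right 0)"
    by (rule lower[OF landau_o.big.trans[OF E(1) h32] PA0]) (simp add: a1_def a1nz)
  have LA1: "eventually (\<lambda>h. 0 < h \<and> \<bar>-2*a1\<bar>/2*h^1 \<le> \<bar>A1 h\<bar>) (at_right 0)"
    by (rule lower[OF landau_o.big.trans[OF E(2) h32] PA1]) (simp add: a1_def a1nz)
  have c: "a1^2/4 > 0" using a1nz by (simp add: a1_def)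
  have ev: "eventually (\<lambda>h. a1^2/4*h^2 \<le> beta0s Cb f (xz - l*h) h \<and> a1^2/4*h^2 \<le> beta1s Cb f (xz - l*h) h) (at_right 0)"
    using LA0 LA1
  proof eventually_elim
    case (elim h)
    have "(\<bar>a1\<bar>*h)^2 \<le> \<bar>A0 h\<bar>^2" "(\<bar>a1\<bar>*h)^2 \<le> \<bar>A1 h\<bar>^2"
      using elim by (intro power_mono; simp add: abs_mult)+
    hence "a1^2*h^2 \<le> A0 h^2" "a1^2*h^2 \<le> A1 h^2" by (simp_all add: power_mult_distrib)
    moreover have "Cb * B0 h^2 \<ge> 0" "Cb * B1 h^2 \<ge> 0" using Cb by simp_all
    ultimately show ?case unfolding b0 b1 by simp
  qed
  have PS: "(\<lambda>h. a1*h + (3-2*l)*a2*h^2) \<in> O[at_right 0](\<lambda>h::real. h^1)"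
    using sum_in_bigo(1)[OF poly_bigo[of 1 1 a1] poly_bigo[of 1 2 "(3-2*l)*a2"]] by simp
  have S1: "S \<in> O[at_right 0](\<lambda>h. h^1)"
    by (rule inO[OF E(6) PS]) simp
  have A01: "A0 \<in> O[at_right 0](\<lambda>h. h^1)"
    by (rule inO[OF E(1)]) (use sum_in_bigo(2)[OF poly_bigo[of 1 1 "2*a1"] poly_bigo[of 1 2 "4*l*a2"]] in \<open>simp_all add: mult_ac\<close>)
  have A11: "A1 \<in> O[at_right 0](\<lambda>h. h^1)"
    by (rule inO[OF E(2)]) (use sum_in_bigo(1)[OF poly_bigo[of 1 1 "-2*a1"] poly_bigo[of 1 2 "4*l*a2"]] in \<open>simp_all add: mult_ac\<close>)
  have B01: "B0 \<in> O[at_right 0](\<lambda>h. h^1)"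
    by (rule inO[OF E(3)]) (use poly_bigo[of 1 2 "2*a2"] in \<open>simp_all add: mult_ac\<close>)
  have B11: "B1 \<in> O[at_right 0](\<lambda>h. h^1)"
    by (rule inO[OF E(4)]) (use poly_bigo[of 1 2 "2*a2"] in \<open>simp_all add: mult_ac\<close>)
  have be0: "(\<lambda>h. A0 h^2/4 + Cb * B0 h^2) \<in> O[at_right 0](\<lambda>h. h^(1+1))"
  proof -
    have X1: "(\<lambda>h. A0 h * A0 h / 4) \<in> O[at_right 0](\<lambda>h. h^(1+1))"
      using powmult[OF A01 A01] by simp
    have X2: "(\<lambda>h. Cb * (B0 h * B0 h)) \<in> O[at_right 0](\<lambda>h. h^(1+1))"
      using powmult[OF B01 B01] Cb by simp
    show ?thesis using sum_in_bigo(1)[OF X1 X2] by (simp add: power2_eq_square)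
  qed
  have be1: "(\<lambda>h. A1 h^2/4 + Cb * B1 h^2) \<in> O[at_right 0](\<lambda>h. h^(1+1))"
  proof -
    have X1: "(\<lambda>h. A1 h * A1 h / 4) \<in> O[at_right 0](\<lambda>h. h^(1+1))"
      using powmult[OF A11 A11] by simp
    have X2: "(\<lambda>h. Cb * (B1 h * B1 h)) \<in> O[at_right 0](\<lambda>h. h^(1+1))"
      using powmult[OF B11 B11] Cb by simp
    show ?thesis using sum_in_bigo(1)[OF X1 X2] by (simp add: power2_eq_square)
  qed
  have TS: "(\<lambda>h. \<bar>T h * S h\<bar>) \<in> O[at_right 0](\<lambda>h. h^(3+1))"
    using powmult[OF E(5) S1] by simp
  have big: "(\<lambda>h. tau4 f (xz - l*h) h * (beta1s Cb f (xz - l*h) h - beta0s Cb f (xz - l*h) h))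
              \<in> O[at_right 0](\<lambda>h. h^(2*2+2))"
    unfolding b0 b1 t4 using powmult[OF TS sum_in_bigo(2)[OF be1 be0]] by simp
  show "(\<lambda>h. omega0 d0 d1 Ca Cb f (xz - l*h) h - d0) \<in> O[at_right 0](\<lambda>h. h^2)"
    using asym(1)[where X="\<lambda>h. xz - l*h", OF d Ca c ev big] .
  show "(\<lambda>h. omega1 d0 d1 Ca Cb f (xz - l*h) h - d1) \<in> O[at_right 0](\<lambda>h. h^2)"
    using asym(2)[where X="\<lambda>h. xz - l*h", OF d Ca c ev big] .
qed

lemma part2:
  assumes C: "Cn_on 6 f U" and xz: "xz \<in> U" and a1z0: "deriv f xz = 0"
    and a2nz: "(deriv ^^ 2) f xz \<noteq> 0"
    and d: "d0>0" "d1>0" "d0+d1=1" and Ca: "Ca>0" and Cb: "Cb>0"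
  shows "(\<lambda>h. omega0 d0 d1 Ca Cb f (xz - l*h) h - d0) \<in> O[at_right 0](\<lambda>h. h^2)"
    and "(\<lambda>h. omega1 d0 d1 Ca Cb f (xz - l*h) h - d1) \<in> O[at_right 0](\<lambda>h. h^2)"
proof -
  define a1 where "a1 = deriv f xz"
  define a2 where "a2 = (deriv ^^ 2) f xz / 2"
  have a1z: "a1 = 0" using a1z0 by (simp add: a1_def)
  have a2nz': "a2 \<noteq> 0" using a2nz by (simp add: a2_def)
  note E = exp'[OF C xz, folded a1_def a2_def]
  have EB0: "(\<lambda>h. B0 h - 2*a2*h^2) \<in> O[at_right 0](\<lambda>h::real. h^(2+1))" using E(3) by simp
  have EB1: "(\<lambda>h. B1 h - 2*a2*h^2) \<in> O[at_right 0](\<lambda>h::real. h^(2+1))" using E(4) by simp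
  have Z: "(\<lambda>h. 2*a2*h^2 - (2*a2)*h^2) \<in> O[at_right 0](\<lambda>h::real. h^(2+1))" by simp
  have LB0: "eventually (\<lambda>h. 0 < h \<and> \<bar>2*a2\<bar>/2*h^2 \<le> \<bar>B0 h\<bar>) (at_right 0)"
    by (rule lower[OF EB0 Z]) (simp add: a2nz')
  have LB1: "eventually (\<lambda>h. 0 < h \<and> \<bar>2*a2\<bar>/2*h^2 \<le> \<bar>B1 h\<bar>) (at_right 0)"
    by (rule lower[OF EB1 Z]) (simp add: a2nz')
  have c: "Cb*a2^2 > 0" using a2nz' Cb by simp
  have ev: "eventually (\<lambda>h. Cb*a2^2*h^4 \<le> beta0s Cb f (xz - l*h) h \<and> Cb*a2^2*h^4 \<le> beta1s Cb f (xz - l*h) h) (at_right 0)"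
    using LB0 LB1
  proof eventually_elim
    case (elim h)
    have "(\<bar>a2\<bar>*h^2)^2 \<le> \<bar>B0 h\<bar>^2" "(\<bar>a2\<bar>*h^2)^2 \<le> \<bar>B1 h\<bar>^2"
      using elim by (intro power_mono; simp add: abs_mult)+
    hence "a2^2*h^4 \<le> B0 h^2" "a2^2*h^4 \<le> B1 h^2" by (simp_all add: power_mult_distrib flip: power_mult)
    hence "Cb*(a2^2*h^4) \<le> Cb*B0 h^2" "Cb*(a2^2*h^4) \<le> Cb*B1 h^2" using Cb by simp_all
    hence "Cb*a2^2*h^4 \<le> Cb*B0 h^2" "Cb*a2^2*h^4 \<le> Cb*B1 h^2" by (simp_all add: mult.assoc)
    moreover have "A0 h^2/4 \<ge> 0" "A1 h^2/4 \<ge> 0" by simp_all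
    ultimately show ?case unfolding b0 b1 by linarith
  qed
  have PS: "(\<lambda>h. a1*h + (3-2*l)*a2*h^2) \<in> O[at_right 0](\<lambda>h::real. h^2)"
  proof -
    have "(\<lambda>h. a1*h + (3-2*l)*a2*h^2) = (\<lambda>h. ((3-2*l)*a2)*h^2)" by (rule ext) (simp add: a1z)
    thus ?thesis by (simp only:) (rule poly_bigo, simp)
  qed
  have S2: "S \<in> O[at_right 0](\<lambda>h. h^2)"
    by (rule inO[OF E(6) PS]) simp
  have TS: "(\<lambda>h. \<bar>T h * S h\<bar>) \<in> O[at_right 0](\<lambda>h. h^(3+2))"
    using powmult[OF E(5) S2] by simp
  have Ap: "(\<lambda>h. A1 h + A0 h) \<in> O[at_right 0](\<lambda>h. h^3)"
  proof -
    have "(\<lambda>h. A1 h + A0 h) = (\<lambda>h. (A1 h - (-2*a1*h + 4*l*a2*h^2)) + (A0 h - (2*a1*h - 4*l*a2*h^2)))"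
      by (rule ext) (simp add: algebra_simps)
    thus ?thesis using sum_in_bigo(1)[OF E(2) E(1)] by simp
  qed
  have Am: "(\<lambda>h. A1 h - A0 h) \<in> O[at_right 0](\<lambda>h. h^2)"
  proof (rule inO)
    have "(\<lambda>h. (A1 h - A0 h) - ((8*l*a2)*h^2)) = (\<lambda>h. (A1 h - (-2*a1*h + 4*l*a2*h^2)) - (A0 h - (2*a1*h - 4*l*a2*h^2)))"
      by (rule ext) (simp add: algebra_simps a1z)
    thus "(\<lambda>h. (A1 h - A0 h) - ((8*l*a2)*h^2)) \<in> O[at_right 0](\<lambda>h. h^3)"
      using sum_in_bigo(2)[OF E(2) E(1)] by simp
    show "(\<lambda>h. (8*l*a2)*h^2) \<in> O[at_right 0](\<lambda>h::real. h^2)" by (rule poly_bigo) simp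
  qed simp
  have Bm: "(\<lambda>h. B1 h - B0 h) \<in> O[at_right 0](\<lambda>h. h^3)"
  proof -
    have "(\<lambda>h. B1 h - B0 h) = (\<lambda>h. (B1 h - 2*a2*h^2) - (B0 h - 2*a2*h^2))"
      by (rule ext) (simp add: algebra_simps)
    thus ?thesis using sum_in_bigo(2)[OF E(4) E(3)] by simp
  qed
  have P2: "(\<lambda>h. 2*a2*h^2) \<in> O[at_right 0](\<lambda>h::real. h^2)" by (rule poly_bigo) simp
  have Bp: "(\<lambda>h. B1 h + B0 h) \<in> O[at_right 0](\<lambda>h. h^2)"
    using sum_in_bigo(1)[OF inO[OF E(4) P2] inO[OF E(3) P2]] by simp
  have D: "(\<lambda>h. (A1 h^2/4 + Cb * B1 h^2) - (A0 h^2/4 + Cb * B0 h^2)) \<in> O[at_right 0](\<lambda>h. h^(2+3))"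
  proof -
    have eq: "(\<lambda>h. (A1 h^2/4 + Cb * B1 h^2) - (A0 h^2/4 + Cb * B0 h^2)) =
       (\<lambda>h. (A1 h - A0 h)*(A1 h + A0 h)/4 + Cb * ((B1 h - B0 h)*(B1 h + B0 h)))"
      by (rule ext) (simp add: field_simps power2_eq_square)
    have X1: "(\<lambda>h. (A1 h - A0 h)*(A1 h + A0 h)/4) \<in> O[at_right 0](\<lambda>h. h^(2+3))"
      using powmult[OF Am Ap] by simp
    have X2: "(\<lambda>h. Cb * ((B1 h - B0 h)*(B1 h + B0 h))) \<in> O[at_right 0](\<lambda>h. h^(2+3))"
      using powmult[OF Bm Bp] Cb by (simp add: add.commute)
    show ?thesis unfolding eq using sum_in_bigo(1)[OF X1 X2] .
  qed
  have big: "(\<lambda>h. tau4 f (xz - l*h) h * (beta1s Cb f (xz - l*h) h - beta0s Cb f (xz - l*h) h))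
              \<in> O[at_right 0](\<lambda>h. h^(2*4+2))"
    unfolding b0 b1 t4 using powmult[OF TS D] by simp
  show "(\<lambda>h. omega0 d0 d1 Ca Cb f (xz - l*h) h - d0) \<in> O[at_right 0](\<lambda>h. h^2)"
    using asym(1)[where X="\<lambda>h. xz - l*h", OF d Ca c ev big] .
  show "(\<lambda>h. omega1 d0 d1 Ca Cb f (xz - l*h) h - d1) \<in> O[at_right 0](\<lambda>h. h^2)"
    using asym(2)[where X="\<lambda>h. xz - l*h", OF d Ca c ev big] .
qed

end


theorem mainTheorem5:
  fixes d0 d1 Ca Cb :: real
  assumes "d0 > 0" and "d1 > 0" and "d0 + d1 = 1" and "Ca > 0" and "Cb > 0"
  shows
    "(\<forall>(f :: real \<Rightarrow> real) (xs :: real) U.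
        xs \<in> U \<and> Cn_on 6 f U \<and> deriv f xs \<noteq> 0 \<longrightarrow>
          (\<lambda>dx. omega0 d0 d1 Ca Cb f xs dx - d0) \<in> O[at_right 0](\<lambda>dx. dx ^ 2) \<and>
          (\<lambda>dx. omega1 d0 d1 Ca Cb f xs dx - d1) \<in> O[at_right 0](\<lambda>dx. dx ^ 2))
   \<and> (\<forall>(f :: real \<Rightarrow> real) (xc :: real) (lam :: real) U.
        xc \<in> U \<and> Cn_on 6 f U \<and> deriv f xc = 0 \<and>
        (deriv ^^ 2) f xc \<noteq> 0 \<and> (deriv ^^ 3) f xc \<noteq> 0 \<and> -1 < lam \<and> lam < 1 \<longrightarrow>
          (\<lambda>dx. omega0 d0 d1 Ca Cb f (xc - lam * dx) dx - d0) \<in> O[at_right 0](\<lambda>dx. dx ^ 2) \<and>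
          (\<lambda>dx. omega1 d0 d1 Ca Cb f (xc - lam * dx) dx - d1) \<in> O[at_right 0](\<lambda>dx. dx ^ 2))"
proof (intro conjI allI impI; elim conjE)
  fix f xs U assume H: "xs \<in> U" "Cn_on 6 f U" "deriv f xs \<noteq> 0"
  show "(\<lambda>dx. omega0 d0 d1 Ca Cb f xs dx - d0) \<in> O[at_right 0](\<lambda>dx. dx ^ 2)"
    using wsetup.part1(1)[where f=f and xz=xs and l=0, OF H(2,1,3) assms] by simp
  show "(\<lambda>dx. omega1 d0 d1 Ca Cb f xs dx - d1) \<in> O[at_right 0](\<lambda>dx. dx ^ 2)"
    using wsetup.part1(2)[where f=f and xz=xs and l=0, OF H(2,1,3) assms] by simp
next
  fix f xc lam U assume H: "xc \<in> U" "Cn_on 6 f U" "deriv f xc = 0" "(deriv ^^ 2) f xc \<noteq> 0"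
  show "(\<lambda>dx. omega0 d0 d1 Ca Cb f (xc - lam * dx) dx - d0) \<in> O[at_right 0](\<lambda>dx. dx ^ 2)"
    using wsetup.part2(1)[where f=f and xz=xc and l=lam, OF H(2,1,3,4) assms] .
  show "(\<lambda>dx. omega1 d0 d1 Ca Cb f (xc - lam * dx) dx - d1) \<in> O[at_right 0](\<lambda>dx. dx ^ 2)"
    using wsetup.part2(2)[where f=f and xz=xc and l=lam, OF H(2,1,3,4) assms] .
qed

end
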